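(* Let $\Lambda$ be any of the logics $K$, $T$, $K4$, $K5$, $S4$, $S5$. A formula $\varphi$ of the language $\mathcal{L}^{+}$ is true at every world of every $\Lambda$-model if and only if $\varphi$ is derivable in the proof system $\Lambda+\mathrm{Ax}$ described below.
   Context: Fix a countable non-empty set $\mathit{At}$ of atoms. A literal is an atom or its negation; a clause is a finite set $D$ of literals read as $\bigvee D$ ($\bigvee\varnothing:=\bot$); it is tautological if it contains $p$ and $\lnot p$ for some $p$. For propositional $\pi$, $\mathcal{C}(\pi)$ is the (finite) set of non-tautological clauses $D$ with $\models\pi\to\bigvee D$ and no $D'\subsetneq D$ with $\models\pi\to\bigvee D'$. Language $\mathcal{L}^{+}$: formulas built from $\top$, atoms $p$, $\lnot$, $\land$, $\Box$, operators $[\ddagger\pi]$ for each propositional formula $\pi$, and operators $[D_1,D_2]_i$ for $i\in\{0,1,2\}$ and any finite non-tautological clauses $D_1,D_2$; other connectives defined as usual. Models: $\mathcal{M}=\langle W,R,V\rangle$, $W\neq\varnothing$, $R\subseteq W\times W$, $V:\mathit{At}\to\mathcal{P}(W)$, standard semantics for atoms, Booleans and $\Box$. For finite non-tautological clauses $D_1,D_2$, the model $\mathcal{M}^{(D_1,D_2)}=\langle W',R',V'\rangle$ has $W'=W\times\{0,1,2\}$, $(w,i)R'(v,j)$ iff $wRv$, $(w,0)\in V'(p)$ iff $w\in V(p)$, and for $i\in\{1,2\}$: $(w,i)\in V'(p)$ iff $\lnot p\in D_i$, or $\{p,\lnot p\}\cap D_i=\varnothing$ and $w\in V(p)$. Semantics: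 $\mathcal{M},w\models[D_1,D_2]_i\varphi$ iff $\mathcal{M}^{(D_1,D_2)},(w,i)\models\varphi$; $\mathcal{M},w\models[\ddagger\pi]\varphi$ iff for all $D_1\in\mathcal{C}(\pi)$ and $D_2\in\mathcal{C}(\lnot\pi)$, $\mathcal{M}^{(D_1,D_2)},(w,0)\models\varphi$. $\Lambda$-models: $K$: all models; $T$: reflexive $R$; $K4$: transitive; $K5$: euclidean; $S4$: reflexive and transitive; $S5$: equivalence relation. The proof system $\Lambda$ (over $\mathcal{L}^{+}$) consists of all instances in $\mathcal{L}^{+}$ of propositional tautologies, the distribution axiom $\Box(\varphi\to\psi)\to(\Box\varphi\to\Box\psi)$, modus ponens and necessitation (from $\varphi$ infer $\Box\varphi$), together with, as appropriate, $\Box\varphi\to\varphi$ (for $T,S4,S5$), $\Box\varphi\to\Box\Box\varphi$ (for $K4,S4,S5$) and $\lnot\Box\varphi\to\Box\lnot\Box\varphi$ (for $K5,S5$). $\mathrm{Ax}$ consists of the following, for all propositional $\pi$, all finite non-tautological clauses $D_1,D_2$, all atoms $p$, all formulas $\varphi,\psi$, and with $[\,\cdot\,]$ ranging over $[D_1,D_2]_0,[D_1,D_2]_1,[D_1,D_2]_2$: (1) $[\ddagger\pi]\varphi\leftrightarrow\bigwedge_{D_1\in\mathcal{C}(\pi)}\bigwedge_{D_2\in\mathcal{C}(\lnot\pi)}[D_1,D_2]_0\varphi$; (2) $[D_1,D_2]_0p\leftrightarrow p$; (3) for $j\in\{1,2\}$: $[D_1,D_2]_jp\leftrightarrow p$ if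 $\{p,\lnot p\}\cap D_j=\varnothing$; $[D_1,D_2]_jp\leftrightarrow\top$ if $\lnot p\in D_j$; $[D_1,D_2]_jp\leftrightarrow\bot$ if $p\in D_j$; (4) $[\,\cdot\,]\lnot\varphi\leftrightarrow\lnot[\,\cdot\,]\varphi$; (5) $[\,\cdot\,](\varphi\land\psi)\leftrightarrow([\,\cdot\,]\varphi\land[\,\cdot\,]\psi)$; (6) $[\,\cdot\,]\Box\varphi\leftrightarrow\Box([D_1,D_2]_0\varphi\land[D_1,D_2]_1\varphi\land[D_1,D_2]_2\varphi)$; (7) $[\,\cdot\,](\varphi\to\psi)\to([\,\cdot\,]\varphi\to[\,\cdot\,]\psi)$; (8) the rule: from $\vdash\varphi$ infer $\vdash[\,\cdot\,]\varphi$. *)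

theory Defs
  imports Main "HOL-Library.Countable"
begin

datatype 'a lit = Pos 'a | Neg 'a

datatype 'a pf = PTop | PAt 'a | PNeg "'a pf" | PAnd "'a pf" "'a pf"

text \<open>The language L+. FUpd D1 D2 i phi is [D1,D2]_i phi; FDag pi phi is [ddagger pi] phi.
  Clauses are sets of literals; well-formedness (finite, non-tautological, i in {0,1,2})
  is imposed by wf_fm.\<close>
datatype 'a fm = FTop | FAt 'a | FNeg "'a fm" | FAnd "'a fm" "'a fm" | FBox "'a fm"
  | FDag "'a pf" "'a fm" | FUpd "'a lit set" "'a lit set" nat "'a fm"

definition FBot :: "'a fm" where "FBot = FNeg FTop"
definition FImp :: "'a fm \<Rightarrow> 'a fm \<Rightarrow> 'a fm" where "FImp p q = FNeg (FAnd p (FNeg q))"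
definition FIff :: "'a fm \<Rightarrow> 'a fm \<Rightarrow> 'a fm" where "FIff p q = FAnd (FImp p q) (FImp q p)"

fun conj_list :: "'a fm list \<Rightarrow> 'a fm" where
  "conj_list [] = FTop"
| "conj_list [x] = x"
| "conj_list (x # xs) = FAnd x (conj_list xs)"

fun peval :: "('a \<Rightarrow> bool) \<Rightarrow> 'a pf \<Rightarrow> bool" where
  "peval v PTop = True"
| "peval v (PAt p) = v p"
| "peval v (PNeg a) = (\<not> peval v a)"
| "peval v (PAnd a b) = (peval v a \<and> peval v b)"

fun lit_true :: "('a \<Rightarrow> bool) \<Rightarrow> 'a lit \<Rightarrow> bool" where
  "lit_true v (Pos p) = v p"
| "lit_true v (Neg p) = (\<not> v p)"

definition clause_true :: "('a \<Rightarrow> bool) \<Rightarrow> 'a lit set \<Rightarrow> bool" where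
  "clause_true v D = (\<exists>l\<in>D. lit_true v l)"

definition taut_clause :: "'a lit set \<Rightarrow> bool" where
  "taut_clause D = (\<exists>p. Pos p \<in> D \<and> Neg p \<in> D)"

definition entails :: "'a pf \<Rightarrow> 'a lit set \<Rightarrow> bool" where
  "entails \<pi> D = (\<forall>v. peval v \<pi> \<longrightarrow> clause_true v D)"

definition Cl :: "'a pf \<Rightarrow> 'a lit set set" where
  "Cl \<pi> = {D. finite D \<and> \<not> taut_clause D \<and> entails \<pi> D \<and> \<not> (\<exists>D'. D' \<subset> D \<and> entails \<pi> D')}"

definition wf_clause :: "'a lit set \<Rightarrow> bool" where
  "wf_clause D = (finite D \<and> \<not> taut_clause D)"

fun wf_fm :: "'a fm \<Rightarrow> bool" where
  "wf_fm FTop = True"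
| "wf_fm (FAt p) = True"
| "wf_fm (FNeg a) = wf_fm a"
| "wf_fm (FAnd a b) = (wf_fm a \<and> wf_fm b)"
| "wf_fm (FBox a) = wf_fm a"
| "wf_fm (FDag \<pi> a) = wf_fm a"
| "wf_fm (FUpd D1 D2 i a) = (wf_clause D1 \<and> wf_clause D2 \<and> i \<le> 2 \<and> wf_fm a)"

type_synonym ('w, 'a) model = "'w set \<times> ('w \<times> 'w) set \<times> ('a \<Rightarrow> 'w set)"

definition is_model :: "('w, 'a) model \<Rightarrow> bool" where
  "is_model M = (case M of (W, R, V) \<Rightarrow> W \<noteq> {} \<and> R \<subseteq> W \<times> W \<and> (\<forall>p. V p \<subseteq> W))"

text \<open>Truth value of atom p at world (u,i) of M^(D1,D2), given its truth value b at u in M.\<close>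
definition upd_atom :: "'a lit set \<times> 'a lit set \<Rightarrow> nat \<Rightarrow> bool \<Rightarrow> 'a \<Rightarrow> bool" where
  "upd_atom d i b p = (if i = 0 then b else
     (let D = (if i = 1 then fst d else snd d) in
        Neg p \<in> D \<or> ({Pos p, Neg p} \<inter> D = {} \<and> b)))"

text \<open>The iterated model M^(ps!0)^(ps!1)...^(ps!(k-1)) has worlds (..((w,i_0),i_1)..,i_(k-1)),
  represented here as the pair (w, [i_0,...,i_(k-1)]).  atv gives the valuation there.\<close>
definition atv :: "('a \<Rightarrow> 'w set) \<Rightarrow> ('a lit set \<times> 'a lit set) list \<Rightarrow> 'w \<Rightarrow> nat list \<Rightarrow> 'a \<Rightarrow> bool" where
  "atv V ps w is p = foldl (\<lambda>b (d, i). upd_atom d i b p) (w \<in> V p) (zip ps is)"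

text \<open>sat M ps w is phi: phi holds in the iterated update model M^ps at world (w,is).\<close>
fun sat :: "('w, 'a) model \<Rightarrow> ('a lit set \<times> 'a lit set) list \<Rightarrow> 'w \<Rightarrow> nat list \<Rightarrow> 'a fm \<Rightarrow> bool" where
  "sat M ps w is FTop = True"
| "sat M ps w is (FAt p) = atv (snd (snd M)) ps w is p"
| "sat M ps w is (FNeg a) = (\<not> sat M ps w is a)"
| "sat M ps w is (FAnd a b) = (sat M ps w is a \<and> sat M ps w is b)"
| "sat M ps w is (FBox a) = (\<forall>v. (w, v) \<in> fst (snd M) \<longrightarrow>
      (\<forall>js. length js = length ps \<and> (\<forall>j\<in>set js. j \<le> 2) \<longrightarrow> sat M ps v js a))"
| "sat M ps w is (FUpd D1 D2 i a) = sat M (ps @ [(D1, D2)]) w (is @ [i]) a"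
| "sat M ps w is (FDag \<pi> a) =
     (\<forall>D1\<in>Cl \<pi>. \<forall>D2\<in>Cl (PNeg \<pi>). sat M (ps @ [(D1, D2)]) w (is @ [0]) a)"

definition sats :: "('w, 'a) model \<Rightarrow> 'w \<Rightarrow> 'a fm \<Rightarrow> bool" where
  "sats M w \<phi> = sat M [] w [] \<phi>"

datatype logic = LK | LT | LK4 | LK5 | LS4 | LS5

definition euclidean :: "('w \<times> 'w) set \<Rightarrow> bool" where
  "euclidean R = (\<forall>x y z. (x, y) \<in> R \<and> (x, z) \<in> R \<longrightarrow> (y, z) \<in> R)"

fun frame_cond :: "logic \<Rightarrow> 'w set \<Rightarrow> ('w \<times> 'w) set \<Rightarrow> bool" where
  "frame_cond LK W R = True"
| "frame_cond LT W R = refl_on W R"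
| "frame_cond LK4 W R = trans R"
| "frame_cond LK5 W R = euclidean R"
| "frame_cond LS4 W R = (refl_on W R \<and> trans R)"
| "frame_cond LS5 W R = equiv W R"

definition L_model :: "logic \<Rightarrow> ('w, 'a) model \<Rightarrow> bool" where
  "L_model L M = (is_model M \<and> frame_cond L (fst M) (fst (snd M)))"

definition valid :: "logic \<Rightarrow> 'w itself \<Rightarrow> 'a fm \<Rightarrow> bool" where
  "valid L (t :: 'w itself) \<phi> = (\<forall>M :: ('w, 'a) model. L_model L M \<longrightarrow> (\<forall>w\<in>fst M. sats M w \<phi>))"

text \<open>Boolean evaluation treating atoms, boxes and update-modalities as propositional variables;
  ptaut phi iff phi is an instance of a propositional tautology.\<close>
fun beval :: "('a fm \<Rightarrow> bool) \<Rightarrow> 'a fm \<Rightarrow> bool" where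
  "beval f FTop = True"
| "beval f (FNeg a) = (\<not> beval f a)"
| "beval f (FAnd a b) = (beval f a \<and> beval f b)"
| "beval f a = f a"

definition ptaut :: "'a fm \<Rightarrow> bool" where
  "ptaut \<phi> = (\<forall>f. beval f \<phi>)"

inductive derivable :: "logic \<Rightarrow> 'a fm \<Rightarrow> bool" for L :: logic where
  taut: "wf_fm \<phi> \<Longrightarrow> ptaut \<phi> \<Longrightarrow> derivable L \<phi>"
| distr: "wf_fm \<phi> \<Longrightarrow> wf_fm \<psi> \<Longrightarrow>
    derivable L (FImp (FBox (FImp \<phi> \<psi>)) (FImp (FBox \<phi>) (FBox \<psi>)))"
| mp: "derivable L (FImp \<phi> \<psi>) \<Longrightarrow> derivable L \<phi> \<Longrightarrow> derivable L \<psi>"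
| nec: "derivable L \<phi> \<Longrightarrow> derivable L (FBox \<phi>)"
| axT: "L \<in> {LT, LS4, LS5} \<Longrightarrow> wf_fm \<phi> \<Longrightarrow> derivable L (FImp (FBox \<phi>) \<phi>)"
| ax4: "L \<in> {LK4, LS4, LS5} \<Longrightarrow> wf_fm \<phi> \<Longrightarrow> derivable L (FImp (FBox \<phi>) (FBox (FBox \<phi>)))"
| ax5: "L \<in> {LK5, LS5} \<Longrightarrow> wf_fm \<phi> \<Longrightarrow>
    derivable L (FImp (FNeg (FBox \<phi>)) (FBox (FNeg (FBox \<phi>))))"
| ax1: "wf_fm \<phi> \<Longrightarrow> set Ds = Cl \<pi> \<times> Cl (PNeg \<pi>) \<Longrightarrow>
    derivable L (FIff (FDag \<pi> \<phi>) (conj_list (map (\<lambda>(D1, D2). FUpd D1 D2 0 \<phi>) Ds)))"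
| ax2: "wf_clause D1 \<Longrightarrow> wf_clause D2 \<Longrightarrow> derivable L (FIff (FUpd D1 D2 0 (FAt p)) (FAt p))"
| ax3a: "wf_clause D1 \<Longrightarrow> wf_clause D2 \<Longrightarrow> j \<in> {1, 2} \<Longrightarrow>
    {Pos p, Neg p} \<inter> (if j = 1 then D1 else D2) = {} \<Longrightarrow>
    derivable L (FIff (FUpd D1 D2 j (FAt p)) (FAt p))"
| ax3b: "wf_clause D1 \<Longrightarrow> wf_clause D2 \<Longrightarrow> j \<in> {1, 2} \<Longrightarrow>
    Neg p \<in> (if j = 1 then D1 else D2) \<Longrightarrow>
    derivable L (FIff (FUpd D1 D2 j (FAt p)) FTop)"
| ax3c: "wf_clause D1 \<Longrightarrow> wf_clause D2 \<Longrightarrow> j \<in> {1, 2} \<Longrightarrow>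
    Pos p \<in> (if j = 1 then D1 else D2) \<Longrightarrow>
    derivable L (FIff (FUpd D1 D2 j (FAt p)) FBot)"
| ax4neg: "wf_clause D1 \<Longrightarrow> wf_clause D2 \<Longrightarrow> i \<le> 2 \<Longrightarrow> wf_fm \<phi> \<Longrightarrow>
    derivable L (FIff (FUpd D1 D2 i (FNeg \<phi>)) (FNeg (FUpd D1 D2 i \<phi>)))"
| ax5and: "wf_clause D1 \<Longrightarrow> wf_clause D2 \<Longrightarrow> i \<le> 2 \<Longrightarrow> wf_fm \<phi> \<Longrightarrow> wf_fm \<psi> \<Longrightarrow>
    derivable L (FIff (FUpd D1 D2 i (FAnd \<phi> \<psi>)) (FAnd (FUpd D1 D2 i \<phi>) (FUpd D1 D2 i \<psi>)))"
| ax6box: "wf_clause D1 \<Longrightarrow> wf_clause D2 \<Longrightarrow> i \<le> 2 \<Longrightarrow> wf_fm \<phi> \<Longrightarrow>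
    derivable L (FIff (FUpd D1 D2 i (FBox \<phi>))
      (FBox (FAnd (FUpd D1 D2 0 \<phi>) (FAnd (FUpd D1 D2 1 \<phi>) (FUpd D1 D2 2 \<phi>)))))"
| ax7k: "wf_clause D1 \<Longrightarrow> wf_clause D2 \<Longrightarrow> i \<le> 2 \<Longrightarrow> wf_fm \<phi> \<Longrightarrow> wf_fm \<psi> \<Longrightarrow>
    derivable L (FImp (FUpd D1 D2 i (FImp \<phi> \<psi>)) (FImp (FUpd D1 D2 i \<phi>) (FUpd D1 D2 i \<psi>)))"
| ax8nec: "wf_clause D1 \<Longrightarrow> wf_clause D2 \<Longrightarrow> i \<le> 2 \<Longrightarrow> derivable L \<phi> \<Longrightarrow>
    derivable L (FUpd D1 D2 i \<phi>)"

end

theory Submission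
  imports Defs "HOL-Library.Countable_Set"
begin

fun conj :: "'a fm list \<Rightarrow> 'a fm" where
  "conj [] = FTop" | "conj (x # xs) = FAnd x (conj xs)"

lemma beval_conj[simp]: "beval f (conj xs) = (\<forall>x\<in>set xs. beval f x)"
  by (induct xs) auto

lemma beval_conj_list[simp]: "beval f (conj_list xs) = (\<forall>x\<in>set xs. beval f x)"
  by (induct xs rule: conj_list.induct) auto

lemma wf_conj_list[simp]: "wf_fm (conj_list xs) = (\<forall>x\<in>set xs. wf_fm x)"
  by (induct xs rule: conj_list.induct) auto

lemma wf_conj[simp]: "wf_fm (conj xs) = (\<forall>x\<in>set xs. wf_fm x)"
  by (induct xs) auto

lemma wf_FImp[simp]: "wf_fm (FImp a b) = (wf_fm a \<and> wf_fm b)" by (simp add: FImp_def)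
lemma wf_FIff[simp]: "wf_fm (FIff a b) = (wf_fm a \<and> wf_fm b)" by (auto simp add: FIff_def)
lemma wf_FBot[simp]: "wf_fm FBot" by (simp add: FBot_def)

lemma Cl_wf: "D \<in> Cl \<pi> \<Longrightarrow> wf_clause D"
  by (simp add: Cl_def wf_clause_def)

lemma derivable_wf: "derivable L \<phi> \<Longrightarrow> wf_fm \<phi>"
proof (induct rule: derivable.induct)
  case (ax1 \<phi> Ds \<pi>)
  then show ?case by (auto dest: Cl_wf)
qed auto

lemma taut_mp1: "derivable L a \<Longrightarrow> wf_fm b \<Longrightarrow> ptaut (FImp a b) \<Longrightarrow> derivable L b"
  by (meson derivable.mp derivable.taut derivable_wf wf_FImp)

lemma taut_mp2: "derivable L a \<Longrightarrow> derivable L b \<Longrightarrow> wf_fm c \<Longrightarrow> ptaut (FImp a (FImp b c)) \<Longrightarrow> derivable L c"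
  by (meson derivable.mp derivable.taut derivable_wf wf_FImp)

lemma taut_mp3: "derivable L a \<Longrightarrow> derivable L b \<Longrightarrow> derivable L c \<Longrightarrow> wf_fm d \<Longrightarrow>
   ptaut (FImp a (FImp b (FImp c d))) \<Longrightarrow> derivable L d"
  by (meson derivable.mp derivable.taut derivable_wf wf_FImp)

lemma beval_simps[simp]: "beval f (FImp a b) = (beval f a \<longrightarrow> beval f b)"
  "beval f (FIff a b) = (beval f a \<longleftrightarrow> beval f b)" "beval f FBot = False"
  by (auto simp: FImp_def FIff_def FBot_def)

lemma box_mono: "derivable L (FImp a b) \<Longrightarrow> derivable L (FImp (FBox a) (FBox b))"
  by (metis derivable.distr derivable.mp derivable.nec derivable_wf wf_FImp)

lemma box_cong: "derivable L (FIff a b) \<Longrightarrow> derivable L (FIff (FBox a) (FBox b))"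
proof -
  assume h: "derivable L (FIff a b)"
  have w: "wf_fm a" "wf_fm b" using derivable_wf[OF h] by auto
  have "derivable L (FImp a b)" by (rule taut_mp1[OF h]) (auto simp: w ptaut_def)
  then have 1: "derivable L (FImp (FBox a) (FBox b))" by (rule box_mono)
  have "derivable L (FImp b a)" by (rule taut_mp1[OF h]) (auto simp: w ptaut_def)
  then have 2: "derivable L (FImp (FBox b) (FBox a))" by (rule box_mono)
  show ?thesis
    by (rule taut_mp2[OF 1 2]) (auto simp: w ptaut_def)
qed

lemma upd_mono: "wf_clause d1 \<Longrightarrow> wf_clause d2 \<Longrightarrow> i \<le> 2 \<Longrightarrow>
  derivable L (FImp a b) \<Longrightarrow> derivable L (FImp (FUpd d1 d2 i a) (FUpd d1 d2 i b))"
  by (metis derivable.ax7k derivable.ax8nec derivable.mp derivable_wf wf_FImp)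

lemma upd_cong: "wf_clause d1 \<Longrightarrow> wf_clause d2 \<Longrightarrow> i \<le> 2 \<Longrightarrow>
  derivable L (FIff a b) \<Longrightarrow> derivable L (FIff (FUpd d1 d2 i a) (FUpd d1 d2 i b))"
proof -
  assume d: "wf_clause d1" "wf_clause d2" "i \<le> 2" and h: "derivable L (FIff a b)"
  have w: "wf_fm a" "wf_fm b" using derivable_wf[OF h] by auto
  have "derivable L (FImp a b)" by (rule taut_mp1[OF h]) (auto simp: w ptaut_def)
  then have 1: "derivable L (FImp (FUpd d1 d2 i a) (FUpd d1 d2 i b))" by (rule upd_mono[OF d])
  have "derivable L (FImp b a)" by (rule taut_mp1[OF h]) (auto simp: w ptaut_def)
  then have 2: "derivable L (FImp (FUpd d1 d2 i b) (FUpd d1 d2 i a))" by (rule upd_mono[OF d])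
  show ?thesis
    by (rule taut_mp2[OF 1 2]) (auto simp: w d ptaut_def)
qed

lemma iff_trans: "derivable L (FIff a b) \<Longrightarrow> derivable L (FIff b c) \<Longrightarrow> derivable L (FIff a c)"
  by (rule taut_mp2[of L "FIff a b" "FIff b c"]) (auto simp: ptaut_def dest!: derivable_wf)

section \<open>Soundness\<close>

lemma sat_beval: "beval (sat M ps w is) \<phi> = sat M ps w is \<phi>"
  by (induct \<phi>) auto

lemma sat_simps[simp]: "sat M ps w is (FImp a b) = (sat M ps w is a \<longrightarrow> sat M ps w is b)"
  "sat M ps w is (FIff a b) = (sat M ps w is a \<longleftrightarrow> sat M ps w is b)" "sat M ps w is FBot = False"
  by (auto simp: FImp_def FIff_def FBot_def)

lemma sat_conj_list[simp]: "sat M ps w is (conj_list xs) = (\<forall>x\<in>set xs. sat M ps w is x)"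
  by (induct xs rule: conj_list.induct) auto

lemma atv_snoc: "length is = length ps \<Longrightarrow>
  atv V (ps @ [d]) w (is @ [i]) p = upd_atom d i (atv V ps w is p) p"
  by (simp add: atv_def)

lemma js_split: "(\<forall>js. length js = Suc n \<and> (\<forall>j\<in>set js. j \<le> (2::nat)) \<longrightarrow> P js) \<longleftrightarrow>
  (\<forall>js. length js = n \<and> (\<forall>j\<in>set js. j \<le> 2) \<longrightarrow> P (js @ [0]) \<and> P (js @ [1]) \<and> P (js @ [2]))"
proof
  assume "\<forall>js. length js = Suc n \<and> (\<forall>j\<in>set js. j \<le> (2::nat)) \<longrightarrow> P js"
  then show "\<forall>js. length js = n \<and> (\<forall>j\<in>set js. j \<le> 2) \<longrightarrow> P (js @ [0]) \<and> P (js @ [1]) \<and> P (js @ [2])"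
    by auto
next
  assume h: "\<forall>js. length js = n \<and> (\<forall>j\<in>set js. j \<le> 2) \<longrightarrow> P (js @ [0]) \<and> P (js @ [1]) \<and> P (js @ [2])"
  show "\<forall>js. length js = Suc n \<and> (\<forall>j\<in>set js. j \<le> (2::nat)) \<longrightarrow> P js"
  proof (intro allI impI)
    fix js :: "nat list" assume a: "length js = Suc n \<and> (\<forall>j\<in>set js. j \<le> 2)"
    then have js: "js = butlast js @ [last js]" by (metis append_butlast_last_id list.size(3) nat.distinct(1))
    have l: "last js \<le> 2" using a js by (metis in_set_conv_decomp)
    have b: "length (butlast js) = n \<and> (\<forall>j\<in>set (butlast js). j \<le> 2)"
      using a by (auto dest: in_set_butlastD)
    have "last js = 0 \<or> last js = 1 \<or> last js = 2" using l by auto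
    moreover have hb: "P (butlast js @ [0]) \<and> P (butlast js @ [1]) \<and> P (butlast js @ [2])" using h b by blast
    ultimately have "P (butlast js @ [last js])" by auto
    from this show "P js" by (simp only: js[symmetric])
  qed
qed

lemma fc_refl: "frame_cond L W R \<Longrightarrow> L \<in> {LT, LS4, LS5} \<Longrightarrow> w \<in> W \<Longrightarrow> (w, w) \<in> R"
  by (auto simp: refl_on_def equiv_def)
lemma fc_trans: "frame_cond L W R \<Longrightarrow> L \<in> {LK4, LS4, LS5} \<Longrightarrow> (x, y) \<in> R \<Longrightarrow> (y, z) \<in> R \<Longrightarrow> (x, z) \<in> R"
  by (auto simp: trans_def equiv_def)
lemma fc_eucl: "frame_cond L W R \<Longrightarrow> L \<in> {LK5, LS5} \<Longrightarrow> (x, y) \<in> R \<Longrightarrow> (x, z) \<in> R \<Longrightarrow> (y, z) \<in> R"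
proof -
  assume a: "frame_cond L W R" "L \<in> {LK5, LS5}" "(x, y) \<in> R" "(x, z) \<in> R"
  show ?thesis
  proof (cases "L = LK5")
    case True then have "euclidean R" using a(1) by simp
    then show ?thesis using a(3,4) unfolding euclidean_def by blast
  next
    case False then have "L = LS5" using a(2) by auto
    then have s: "sym R" and t: "trans R" using a(1) by (auto simp: equiv_def)
    have "(y, x) \<in> R" using s a(3) by (rule symD)
    then show ?thesis using t a(4) by (meson transD)
  qed
qed

lemma soundness:
  assumes "derivable L \<phi>" "L_model L M"
  shows "\<And>ps w is. w \<in> fst M \<Longrightarrow> length is = length ps \<Longrightarrow> \<forall>j\<in>set is. j \<le> 2 \<Longrightarrow> sat M ps w is \<phi>"
  using assms(1)
proof induct
  case (taut \<phi>)
  then show ?case by (metis ptaut_def sat_beval)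
next
  case (distr \<phi> \<psi>)
  then show ?case by auto
next
  case (mp \<phi> \<psi>)
  then show ?case by auto
next
  case (nec \<phi>)
  then show ?case using assms(2) by (auto simp: L_model_def is_model_def split: prod.splits)
next
  case (axT \<phi>)
  then show ?case using assms(2) fc_refl[of L "fst M" "fst (snd M)" w] by (auto simp: L_model_def)
next
  case (ax4 \<phi>)
  then show ?case using assms(2) fc_trans[of L "fst M" "fst (snd M)"] by (auto simp: L_model_def)
next
  case (ax5 \<phi>)
  obtain W R V where M: "M = (W, R, V)" by (cases M)
  have fc: "frame_cond L W R" using assms(2) M by (simp add: L_model_def)
  have key: "sat M ps w is (FBox (FNeg (FBox \<phi>)))" if h: "sat M ps w is (FNeg (FBox \<phi>))"
  proof -
    obtain v js where v: "(w, v) \<in> R" "length js = length ps \<and> (\<forall>j\<in>set js. j \<le> 2)" "\<not> sat M ps v js \<phi>"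
      using h M by auto
    have uv: "(u, v) \<in> R" if "(w, u) \<in> R" for u using fc_eucl[OF fc ax5(1) that v(1)] .
    show ?thesis using v uv M by auto
  qed
  then show ?case by auto
next
  case (ax1 \<phi> Ds \<pi>)
  then show ?case by auto
next
  case (ax2 D1 D2 p)
  then show ?case by (simp add: atv_snoc upd_atom_def)
next
  case (ax3a D1 D2 j p)
  then show ?case by (auto simp add: atv_snoc upd_atom_def)
next
  case (ax3b D1 D2 j p)
  then show ?case by (auto simp add: atv_snoc upd_atom_def)
next
  case (ax3c D1 D2 j p)
  then show ?case by (auto simp add: atv_snoc upd_atom_def wf_clause_def taut_clause_def)
next
  case (ax4neg D1 D2 i \<phi>)
  then show ?case by auto
next
  case (ax5and D1 D2 i \<phi> \<psi>)
  then show ?case by auto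
next
  case (ax6box D1 D2 i \<phi>)
  have "sat M (ps @ [(D1, D2)]) w (is @ [i]) (FBox \<phi>) =
    (\<forall>v. (w, v) \<in> fst (snd M) \<longrightarrow> (\<forall>js. length js = Suc (length ps) \<and> (\<forall>j\<in>set js. j \<le> 2)
        \<longrightarrow> sat M (ps @ [(D1, D2)]) v js \<phi>))" by simp
  also have "\<dots> = sat M ps w is (FBox (FAnd (FUpd D1 D2 0 \<phi>) (FAnd (FUpd D1 D2 1 \<phi>) (FUpd D1 D2 2 \<phi>))))"
    by (subst js_split) auto
  finally show ?case by simp
next
  case (ax7k D1 D2 i \<phi> \<psi>)
  then show ?case by auto
next
  case (ax8nec D1 D2 i \<phi>)
  then show ?case by auto
qed

lemma soundness_valid: "derivable L \<phi> \<Longrightarrow> valid L TYPE('v) \<phi>"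
  unfolding valid_def sats_def using soundness by fastforce

section \<open>Finiteness of prime implicates\<close>

fun patoms :: "'a pf \<Rightarrow> 'a set" where
  "patoms PTop = {}" | "patoms (PAt p) = {p}" | "patoms (PNeg a) = patoms a"
| "patoms (PAnd a b) = patoms a \<union> patoms b"

lemma finite_patoms: "finite (patoms \<pi>)" by (induct \<pi>) auto

lemma peval_agree: "(\<forall>p\<in>patoms \<pi>. v p = v' p) \<Longrightarrow> peval v \<pi> = peval v' \<pi>"
  by (induct \<pi>) auto

fun latom :: "'a lit \<Rightarrow> 'a" where "latom (Pos p) = p" | "latom (Neg p) = p"
fun lsign :: "'a lit \<Rightarrow> bool" where "lsign (Pos p) = True" | "lsign (Neg p) = False"

lemma lit_true_as: "lit_true v l = (v (latom l) = lsign l)"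
  by (cases l) auto

lemma lit_eq: "latom l = latom l' \<Longrightarrow> lsign l = lsign l' \<Longrightarrow> l = l'"
  by (cases l; cases l') auto

lemma lit_taut: "l \<in> D \<Longrightarrow> l' \<in> D \<Longrightarrow> latom l = latom l' \<Longrightarrow> lsign l \<noteq> lsign l' \<Longrightarrow> taut_clause D"
  unfolding taut_clause_def by (cases l; cases l') auto

lemma Cl_sub: "D \<in> Cl \<pi> \<Longrightarrow> D \<subseteq> Pos ` patoms \<pi> \<union> Neg ` patoms \<pi>"
proof
  fix l assume D: "D \<in> Cl \<pi>" and l: "l \<in> D"
  show "l \<in> Pos ` patoms \<pi> \<union> Neg ` patoms \<pi>"
  proof (rule ccontr)
    assume nl: "l \<notin> Pos ` patoms \<pi> \<union> Neg ` patoms \<pi>"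
    have q: "latom l \<notin> patoms \<pi>" using nl by (cases l) auto
    have "entails \<pi> (D - {l})"
      unfolding entails_def
    proof (intro allI impI)
      fix v assume pv: "peval v \<pi>"
      define v' where "v' = v(latom l := \<not> lsign l)"
      have "peval v' \<pi>" using pv peval_agree[of \<pi> v v'] q unfolding v'_def by auto
      then have "clause_true v' D" using D unfolding Cl_def entails_def by auto
      then obtain l' where l': "l' \<in> D" "lit_true v' l'" unfolding clause_true_def by auto
      have nt: "\<not> taut_clause D" using D unfolding Cl_def by auto
      have "l' \<noteq> l" using l' unfolding v'_def by (auto simp: lit_true_as)
      moreover have "latom l' \<noteq> latom l"
        using lit_eq lit_taut[OF l l'(1)] nt calculation by metis
      ultimately show "clause_true v (D - {l})"
        using l' unfolding clause_true_def v'_def by (auto simp: lit_true_as)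
    qed
    moreover have "D - {l} \<subset> D" using l by auto
    ultimately show False using D unfolding Cl_def by auto
  qed
qed

lemma finite_Cl: "finite (Cl \<pi>)"
proof -
  have "Cl \<pi> \<subseteq> Pow (Pos ` patoms \<pi> \<union> Neg ` patoms \<pi>)" using Cl_sub by auto
  then show ?thesis by (rule finite_subset) (simp add: finite_patoms)
qed

definition Dsl :: "'a pf \<Rightarrow> ('a lit set \<times> 'a lit set) list" where
  "Dsl \<pi> = (SOME Ds. set Ds = Cl \<pi> \<times> Cl (PNeg \<pi>))"

lemma set_Dsl: "set (Dsl \<pi>) = Cl \<pi> \<times> Cl (PNeg \<pi>)"
  unfolding Dsl_def by (rule someI_ex) (simp add: finite_Cl finite_list)

section \<open>Reduction to the pure modal language\<close>

fun pure :: "'a fm \<Rightarrow> bool" where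
  "pure FTop = True" | "pure (FAt p) = True" | "pure (FNeg a) = pure a"
| "pure (FAnd a b) = (pure a \<and> pure b)" | "pure (FBox a) = pure a" | "pure _ = False"

lemma pure_wf: "pure \<phi> \<Longrightarrow> wf_fm \<phi>" by (induct \<phi>) auto

lemma pure_conj_list: "(\<forall>x\<in>set xs. pure x) \<Longrightarrow> pure (conj_list xs)"
  by (induct xs rule: conj_list.induct) auto

fun push :: "'a lit set \<Rightarrow> 'a lit set \<Rightarrow> nat \<Rightarrow> 'a fm \<Rightarrow> 'a fm" where
  "push d1 d2 i FTop = FTop"
| "push d1 d2 i (FAt p) = (if i = 0 then FAt p else
     (let D = (if i = 1 then d1 else d2) in
      if Neg p \<in> D then FTop else if Pos p \<in> D then FBot else FAt p))"
| "push d1 d2 i (FNeg a) = FNeg (push d1 d2 i a)"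
| "push d1 d2 i (FAnd a b) = FAnd (push d1 d2 i a) (push d1 d2 i b)"
| "push d1 d2 i (FBox a) = FBox (FAnd (push d1 d2 0 a) (FAnd (push d1 d2 1 a) (push d1 d2 2 a)))"
| "push d1 d2 i a = FTop"

fun red :: "'a fm \<Rightarrow> 'a fm" where
  "red FTop = FTop" | "red (FAt p) = FAt p" | "red (FNeg a) = FNeg (red a)"
| "red (FAnd a b) = FAnd (red a) (red b)" | "red (FBox a) = FBox (red a)"
| "red (FUpd d1 d2 i a) = push d1 d2 i (red a)"
| "red (FDag \<pi> a) = conj_list (map (\<lambda>(D1, D2). push D1 D2 0 (red a)) (Dsl \<pi>))"

lemma pure_FImp[simp]: "pure (FImp a b) = (pure a \<and> pure b)" by (simp add: FImp_def)
lemma pure_FBot[simp]: "pure FBot" by (simp add: FBot_def)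

lemma push_ok: "pure \<chi> \<Longrightarrow> wf_clause d1 \<Longrightarrow> wf_clause d2 \<Longrightarrow> i \<le> 2 \<Longrightarrow>
  pure (push d1 d2 i \<chi>) \<and> derivable L (FIff (FUpd d1 d2 i \<chi>) (push d1 d2 i \<chi>))"
proof (induct \<chi> arbitrary: i)
  case FTop
  have "derivable L (FUpd d1 d2 i FTop)"
    using FTop by (intro derivable.ax8nec derivable.taut) (auto simp: ptaut_def)
  then show ?case using FTop
    apply simp apply (rule taut_mp1[of L "FUpd d1 d2 i FTop"]) apply (auto simp: ptaut_def) done
next
  case (FAt p)
  show ?case
  proof (cases "i = 0")
    case True
    then show ?thesis using FAt by (simp add: derivable.ax2)
  next
    case False
    then have j: "i \<in> {1, 2}" using FAt by auto
    define D where "D = (if i = 1 then d1 else d2)"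
    show ?thesis
    proof (cases "Neg p \<in> D")
      case True
      then show ?thesis using FAt j False derivable.ax3b[of d1 d2 i p L]
        by (auto simp: D_def Let_def)
    next
      case n: False
      show ?thesis
      proof (cases "Pos p \<in> D")
        case True
        then show ?thesis using FAt j False n derivable.ax3c[of d1 d2 i p L]
          by (auto simp: D_def Let_def)
      next
        case False
        then show ?thesis using FAt j \<open>i \<noteq> 0\<close> n derivable.ax3a[of d1 d2 i p L]
          by (auto simp: D_def Let_def)
      qed
    qed
  qed
next
  case (FNeg a)
  then have ih: "pure (push d1 d2 i a)" "derivable L (FIff (FUpd d1 d2 i a) (push d1 d2 i a))" by auto
  have ax: "derivable L (FIff (FUpd d1 d2 i (FNeg a)) (FNeg (FUpd d1 d2 i a)))"
    using FNeg by (intro derivable.ax4neg) (auto simp: pure_wf)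
  show ?case using ih
    apply simp apply (rule taut_mp2[OF ax ih(2)]) apply (use FNeg pure_wf in \<open>auto simp: ptaut_def\<close>) done
next
  case (FAnd a b)
  then have ih: "pure (push d1 d2 i a)" "derivable L (FIff (FUpd d1 d2 i a) (push d1 d2 i a))"
     "pure (push d1 d2 i b)" "derivable L (FIff (FUpd d1 d2 i b) (push d1 d2 i b))" by auto
  have ax: "derivable L (FIff (FUpd d1 d2 i (FAnd a b)) (FAnd (FUpd d1 d2 i a) (FUpd d1 d2 i b)))"
    using FAnd by (intro derivable.ax5and) (auto simp: pure_wf)
  show ?case using ih
    apply simp apply (rule taut_mp3[OF ax ih(2) ih(4)]) apply (use FAnd pure_wf in \<open>auto simp: ptaut_def\<close>) done
next
  case (FBox a)
  then have ih: "\<And>k. k \<le> 2 \<Longrightarrow> pure (push d1 d2 k a) \<and> derivable L (FIff (FUpd d1 d2 k a) (push d1 d2 k a))"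
    by auto
  have i0: "derivable L (FIff (FUpd d1 d2 0 a) (push d1 d2 0 a))" and p0: "pure (push d1 d2 0 a)"
    using ih[of 0] by auto
  have i1: "derivable L (FIff (FUpd d1 d2 1 a) (push d1 d2 1 a))" and p1: "pure (push d1 d2 1 a)"
    using ih[of 1] by auto
  have i2: "derivable L (FIff (FUpd d1 d2 2 a) (push d1 d2 2 a))" and p2: "pure (push d1 d2 2 a)"
    using ih[of 2] by auto
  have ax: "derivable L (FIff (FUpd d1 d2 i (FBox a))
      (FBox (FAnd (FUpd d1 d2 0 a) (FAnd (FUpd d1 d2 1 a) (FUpd d1 d2 2 a)))))"
    using FBox by (intro derivable.ax6box) (auto simp: pure_wf)
  have c: "derivable L (FIff (FAnd (FUpd d1 d2 0 a) (FAnd (FUpd d1 d2 1 a) (FUpd d1 d2 2 a)))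
     (FAnd (push d1 d2 0 a) (FAnd (push d1 d2 1 a) (push d1 d2 2 a))))"
    by (rule taut_mp3[OF i0 i1 i2]) (use FBox pure_wf p0 p1 p2 in \<open>auto simp: ptaut_def\<close>)
  show ?case using p0 p1 p2 iff_trans[OF ax box_cong[OF c]] by simp
qed auto

lemma conj_list_cong: "(\<forall>x\<in>set xs. derivable L (FIff (f x) (g x))) \<Longrightarrow>
  derivable L (FIff (conj_list (map f xs)) (conj_list (map g xs)))"
proof (induct xs rule: induct_list012)
  case 1
  then show ?case by (intro derivable.taut) (auto simp: ptaut_def)
next
  case (2 x)
  then show ?case by simp
next
  case (3 x y zs)
  then have h1: "derivable L (FIff (f x) (g x))"
    and h2: "derivable L (FIff (conj_list (map f (y # zs))) (conj_list (map g (y # zs))))" by auto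
  show ?case
    apply simp apply (rule taut_mp2[OF h1 h2])
      apply (use derivable_wf[OF h1] derivable_wf[OF h2] in \<open>auto simp: ptaut_def\<close>) done
qed

lemma red_ok: "wf_fm \<phi> \<Longrightarrow> pure (red \<phi>) \<and> derivable L (FIff \<phi> (red \<phi>))"
proof (induct \<phi>)
  case FTop
  then show ?case by (simp, intro derivable.taut) (auto simp: ptaut_def)
next
  case (FAt p)
  then show ?case by (simp, intro derivable.taut) (auto simp: ptaut_def)
next
  case (FNeg a)
  then have ih: "pure (red a)" "derivable L (FIff a (red a))" by auto
  show ?case using ih
    apply simp apply (rule taut_mp1[OF ih(2)]) apply (use derivable_wf[OF ih(2)] in \<open>auto simp: ptaut_def\<close>) done
next
  case (FAnd a b)
  then have ih: "pure (red a)" "derivable L (FIff a (red a))" "pure (red b)" "derivable L (FIff b (red b))" by auto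
  show ?case using ih
    apply simp apply (rule taut_mp2[OF ih(2) ih(4)])
      apply (use derivable_wf[OF ih(2)] derivable_wf[OF ih(4)] in \<open>auto simp: ptaut_def\<close>) done
next
  case (FBox a)
  then have ih: "pure (red a)" "derivable L (FIff a (red a))" by auto
  show ?case using ih box_cong[OF ih(2)] by simp
next
  case (FUpd d1 d2 i a)
  then have ih: "pure (red a)" "derivable L (FIff a (red a))" and d: "wf_clause d1" "wf_clause d2" "i \<le> 2" by auto
  have p: "pure (push d1 d2 i (red a)) \<and> derivable L (FIff (FUpd d1 d2 i (red a)) (push d1 d2 i (red a)))"
    using push_ok[OF ih(1) d] by blast
  show ?case using p iff_trans[OF upd_cong[OF d ih(2)]] by simp
next
  case (FDag \<pi> a)
  then have ih: "pure (red a)" "derivable L (FIff a (red a))" and w: "wf_fm a" by auto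
  have ax: "derivable L (FIff (FDag \<pi> a) (conj_list (map (\<lambda>(D1, D2). FUpd D1 D2 0 a) (Dsl \<pi>))))"
    by (rule derivable.ax1[OF w set_Dsl])
  have each: "\<forall>x\<in>set (Dsl \<pi>). pure ((\<lambda>(D1, D2). push D1 D2 0 (red a)) x) \<and>
     derivable L (FIff ((\<lambda>(D1, D2). FUpd D1 D2 0 a) x) ((\<lambda>(D1, D2). push D1 D2 0 (red a)) x))"
  proof
    fix x assume "x \<in> set (Dsl \<pi>)"
    then obtain D1 D2 where x: "x = (D1, D2)" "wf_clause D1" "wf_clause D2"
      by (auto simp: set_Dsl dest: Cl_wf)
    have p: "pure (push D1 D2 0 (red a)) \<and> derivable L (FIff (FUpd D1 D2 0 (red a)) (push D1 D2 0 (red a)))"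
      using push_ok[OF ih(1) x(2,3)] by blast
    show "pure ((\<lambda>(D1, D2). push D1 D2 0 (red a)) x) \<and>
     derivable L (FIff ((\<lambda>(D1, D2). FUpd D1 D2 0 a) x) ((\<lambda>(D1, D2). push D1 D2 0 (red a)) x))"
      using p iff_trans[OF upd_cong[OF x(2,3) _ ih(2)]] x(1) by simp
  qed
  have "derivable L (FIff (conj_list (map (\<lambda>(D1, D2). FUpd D1 D2 0 a) (Dsl \<pi>)))
        (conj_list (map (\<lambda>(D1, D2). push D1 D2 0 (red a)) (Dsl \<pi>))))"
    by (rule conj_list_cong) (use each in blast)
  then show ?case using iff_trans[OF ax] each by (auto intro!: pure_conj_list)
qed

section \<open>Completeness for the pure modal language\<close>

datatype 'a pm = MTop | MAt 'a | MNeg "'a pm" | MAnd "'a pm" "'a pm" | MBox "'a pm"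

instance pm :: (countable) countable by countable_datatype

fun to_fm :: "'a pm \<Rightarrow> 'a fm" where
  "to_fm MTop = FTop" | "to_fm (MAt p) = FAt p" | "to_fm (MNeg a) = FNeg (to_fm a)"
| "to_fm (MAnd a b) = FAnd (to_fm a) (to_fm b)" | "to_fm (MBox a) = FBox (to_fm a)"

lemma pure_range: "pure \<phi> \<Longrightarrow> \<exists>m. \<phi> = to_fm m"
proof (induct \<phi>)
  case FTop then show ?case by (metis to_fm.simps(1))
next
  case (FAt p) then show ?case by (metis to_fm.simps(2))
next
  case (FNeg a) then show ?case by (metis pure.simps(3) to_fm.simps(3))
next
  case (FAnd a b) then show ?case by (metis pure.simps(4) to_fm.simps(4))
next
  case (FBox a) then show ?case by (metis pure.simps(5) to_fm.simps(5))
qed auto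

definition cons :: "logic \<Rightarrow> 'a fm set \<Rightarrow> bool" where
  "cons L S = (\<forall>xs. set xs \<subseteq> S \<longrightarrow> \<not> derivable L (FNeg (conj xs)))"

definition mcs :: "logic \<Rightarrow> 'a fm set \<Rightarrow> bool" where
  "mcs L G = (G \<subseteq> Collect pure \<and> cons L G \<and> (\<forall>\<phi>. pure \<phi> \<longrightarrow> \<phi> \<in> G \<or> FNeg \<phi> \<in> G))"

lemma incons_insert:
  assumes "\<not> cons L (insert \<phi> M)" "M \<subseteq> Collect pure" "pure \<phi>"
  shows "\<exists>ys. set ys \<subseteq> M \<and> derivable L (FNeg (FAnd \<phi> (conj ys)))"
proof -
  obtain xs where xs: "set xs \<subseteq> insert \<phi> M" "derivable L (FNeg (conj xs))"
    using assms(1) unfolding cons_def by auto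
  let ?ys = "filter (\<lambda>x. x \<noteq> \<phi>) xs"
  have "set ?ys \<subseteq> M" using xs by auto
  moreover have "derivable L (FNeg (FAnd \<phi> (conj ?ys)))"
    by (rule taut_mp1[OF xs(2)]) (use xs assms in \<open>auto simp: ptaut_def pure_wf\<close>)
  ultimately show ?thesis by blast
qed

lemma lindenbaum:
  assumes "cons L S" "S \<subseteq> Collect pure"
  shows "\<exists>G. mcs L G \<and> S \<subseteq> G"
proof -
  let ?A = "{T. S \<subseteq> T \<and> T \<subseteq> Collect pure \<and> cons L T}"
  have "\<exists>M\<in>?A. \<forall>X\<in>?A. M \<subseteq> X \<longrightarrow> X = M"
  proof (rule subset_Zorn_nonempty)
    show "?A \<noteq> {}" using assms by blast
  next
    fix C assume C: "C \<noteq> {}" "subset.chain ?A C"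
    have sub: "C \<subseteq> ?A" using C(2) by (simp add: subset.chain_def)
    have 1: "S \<subseteq> \<Union>C" using C(1) sub by blast
    have 2: "\<Union>C \<subseteq> Collect pure" using sub by blast
    have 3: "cons L (\<Union>C)" unfolding cons_def
    proof (intro allI impI)
      fix xs assume xs: "set xs \<subseteq> \<Union>C"
      obtain B where B: "B \<in> C" "set xs \<subseteq> B"
        using finite_subset_Union_chain[of "set xs" C ?A] xs C by auto
      then show "\<not> derivable L (FNeg (conj xs))" using sub unfolding cons_def by blast
    qed
    show "\<Union>C \<in> ?A" using 1 2 3 by blast
  qed
  then obtain M where M: "M \<in> ?A" and max: "\<forall>X\<in>?A. M \<subseteq> X \<longrightarrow> X = M" by blast
  have "\<forall>\<phi>. pure \<phi> \<longrightarrow> \<phi> \<in> M \<or> FNeg \<phi> \<in> M"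
  proof (intro allI impI)
    fix \<phi> :: "'a fm" assume p: "pure \<phi>"
    show "\<phi> \<in> M \<or> FNeg \<phi> \<in> M"
    proof (rule ccontr)
      assume n: "\<not> (\<phi> \<in> M \<or> FNeg \<phi> \<in> M)"
      have "\<not> cons L (insert \<phi> M)"
      proof
        assume "cons L (insert \<phi> M)"
        then have "insert \<phi> M \<in> ?A" using M p by auto
        then have "insert \<phi> M = M" using max by blast
        then show False using n by auto
      qed
      then obtain ys1 where y1: "set ys1 \<subseteq> M" "derivable L (FNeg (FAnd \<phi> (conj ys1)))"
        using incons_insert[of L \<phi> M] M p by auto
      have "\<not> cons L (insert (FNeg \<phi>) M)"
      proof
        assume "cons L (insert (FNeg \<phi>) M)"
        then have "insert (FNeg \<phi>) M \<in> ?A" using M p by auto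
        then have "insert (FNeg \<phi>) M = M" using max by blast
        then show False using n by auto
      qed
      then obtain ys2 where y2: "set ys2 \<subseteq> M" "derivable L (FNeg (FAnd (FNeg \<phi>) (conj ys2)))"
        using incons_insert[of L "FNeg \<phi>" M] M p by auto
      have "derivable L (FNeg (conj (ys1 @ ys2)))"
        by (rule taut_mp2[OF y1(2) y2(2)]) (use y1 y2 M in \<open>auto simp: ptaut_def pure_wf\<close>)
      then show False using M y1 y2 unfolding cons_def by auto
    qed
  qed
  then show ?thesis using M unfolding mcs_def by blast
qed

lemma mcs_pure: "mcs L G \<Longrightarrow> \<phi> \<in> G \<Longrightarrow> pure \<phi>"
  by (auto simp: mcs_def)

lemma mcs_deriv:
  assumes G: "mcs L G" and xs: "set xs \<subseteq> G" and d: "derivable L (FImp (conj xs) \<phi>)" and p: "pure \<phi>"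
  shows "\<phi> \<in> G"
proof (rule ccontr)
  assume "\<phi> \<notin> G"
  then have "FNeg \<phi> \<in> G" using G p by (auto simp: mcs_def)
  then have "set (FNeg \<phi> # xs) \<subseteq> G" using xs by auto
  moreover have "derivable L (FNeg (conj (FNeg \<phi> # xs)))"
    by (rule taut_mp1[OF d]) (use derivable_wf[OF d] p in \<open>auto simp: ptaut_def pure_wf\<close>)
  ultimately show False using G unfolding mcs_def cons_def by blast
qed

lemma mcs_thm: "mcs L G \<Longrightarrow> derivable L \<phi> \<Longrightarrow> pure \<phi> \<Longrightarrow> \<phi> \<in> G"
  by (rule mcs_deriv[of L G "[]"]) (auto intro: taut_mp1 simp: ptaut_def pure_wf)

lemma mcs_not_both: "mcs L G \<Longrightarrow> \<phi> \<in> G \<Longrightarrow> FNeg \<phi> \<in> G \<Longrightarrow> False"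
proof -
  assume G: "mcs L G" and a: "\<phi> \<in> G" "FNeg \<phi> \<in> G"
  have "derivable L (FNeg (conj [\<phi>, FNeg \<phi>]))"
    using mcs_pure[OF G a(1)] by (intro derivable.taut) (auto simp: ptaut_def pure_wf)
  moreover have "set [\<phi>, FNeg \<phi>] \<subseteq> G" using a by auto
  ultimately show False using G unfolding mcs_def cons_def by blast
qed

lemma mcs_neg: "mcs L G \<Longrightarrow> pure \<phi> \<Longrightarrow> (FNeg \<phi> \<in> G) = (\<phi> \<notin> G)"
  using mcs_not_both by (auto simp: mcs_def)

lemma mcs_and: "mcs L G \<Longrightarrow> pure a \<Longrightarrow> pure b \<Longrightarrow> (FAnd a b \<in> G) = (a \<in> G \<and> b \<in> G)"
proof -
  assume G: "mcs L G" and p: "pure a" "pure b"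
  show ?thesis
  proof (intro iffI conjI)
    assume h: "FAnd a b \<in> G"
    show "a \<in> G" by (rule mcs_deriv[OF G, of "[FAnd a b]"]) (use h p in \<open>auto intro!: derivable.taut simp: ptaut_def pure_wf\<close>)
    show "b \<in> G" by (rule mcs_deriv[OF G, of "[FAnd a b]"]) (use h p in \<open>auto intro!: derivable.taut simp: ptaut_def pure_wf\<close>)
  next
    assume h: "a \<in> G \<and> b \<in> G"
    show "FAnd a b \<in> G" by (rule mcs_deriv[OF G, of "[a, b]"]) (use h p in \<open>auto intro!: derivable.taut simp: ptaut_def pure_wf\<close>)
  qed
qed

lemma mcs_mp: "mcs L G \<Longrightarrow> FImp a b \<in> G \<Longrightarrow> a \<in> G \<Longrightarrow> pure b \<Longrightarrow> b \<in> G"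
proof -
  assume G: "mcs L G" and h: "FImp a b \<in> G" "a \<in> G" and p: "pure b"
  have pa: "pure a" using mcs_pure[OF G h(2)] .
  show ?thesis by (rule mcs_deriv[OF G, of "[FImp a b, a]"]) (use h p pa in \<open>auto intro!: derivable.taut simp: ptaut_def pure_wf\<close>)
qed

lemma box_conj: "\<forall>y\<in>set ys. wf_fm y \<Longrightarrow> derivable L (FImp (conj (map FBox ys)) (FBox (conj ys)))"
proof (induct ys)
  case Nil
  have "derivable L (FBox FTop)" by (intro derivable.nec derivable.taut) (auto simp: ptaut_def)
  then show ?case apply simp apply (rule taut_mp1[of L "FBox FTop"]) apply (auto simp: ptaut_def) done
next
  case (Cons y ys)
  then have ih: "derivable L (FImp (conj (map FBox ys)) (FBox (conj ys)))"
    and w: "wf_fm y" "\<forall>y\<in>set ys. wf_fm y" by auto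
  have t: "derivable L (FImp y (FImp (conj ys) (FAnd y (conj ys))))"
    by (intro derivable.taut) (auto simp: ptaut_def w)
  have b1: "derivable L (FImp (FBox y) (FBox (FImp (conj ys) (FAnd y (conj ys)))))" by (rule box_mono[OF t])
  have b2: "derivable L (FImp (FBox (FImp (conj ys) (FAnd y (conj ys))))
      (FImp (FBox (conj ys)) (FBox (FAnd y (conj ys)))))" by (rule derivable.distr) (auto simp: w)
  show ?case apply simp apply (rule taut_mp3[OF ih b1 b2]) apply (auto simp: ptaut_def w) done
qed

definition RC :: "logic \<Rightarrow> ('a fm set \<times> 'a fm set) set" where
  "RC L = {(G, D). mcs L G \<and> mcs L D \<and> (\<forall>\<chi>. FBox \<chi> \<in> G \<longrightarrow> \<chi> \<in> D)}"

lemma witness: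
  assumes G: "mcs L G" and p: "pure \<psi>" and nb: "FBox \<psi> \<notin> G"
  shows "\<exists>D. mcs L D \<and> (G, D) \<in> RC L \<and> \<psi> \<notin> D"
proof -
  let ?S = "insert (FNeg \<psi>) {\<chi>. FBox \<chi> \<in> G}"
  have Sp: "?S \<subseteq> Collect pure" using G p by (auto simp: mcs_def)
  have "cons L ?S"
    unfolding cons_def
  proof (intro allI impI notI)
    fix xs assume xs: "set xs \<subseteq> ?S" and d: "derivable L (FNeg (conj xs))"
    let ?ys = "filter (\<lambda>x. x \<noteq> FNeg \<psi>) xs"
    have ys: "\<forall>y\<in>set ?ys. FBox y \<in> G" using xs by auto
    have yw: "\<forall>y\<in>set ?ys. wf_fm y" using ys G by (auto simp: mcs_def pure_wf)
    have "derivable L (FImp (conj ?ys) \<psi>)"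
      by (rule taut_mp1[OF d]) (use yw p pure_wf in \<open>auto simp: ptaut_def\<close>)
    then have b: "derivable L (FImp (FBox (conj ?ys)) (FBox \<psi>))" by (rule box_mono)
    have "derivable L (FImp (conj (map FBox ?ys)) (FBox \<psi>))"
      by (rule taut_mp2[OF box_conj[OF yw] b]) (use yw p pure_wf in \<open>auto simp: ptaut_def\<close>)
    then have "FBox \<psi> \<in> G" by (rule mcs_deriv[OF G, rotated]) (use ys p in auto)
    then show False using nb by simp
  qed
  then obtain D where D: "mcs L D" "?S \<subseteq> D" using lindenbaum[OF _ Sp] by blast
  then have "\<psi> \<notin> D" using mcs_not_both[OF D(1)] by blast
  then show ?thesis using D G unfolding RC_def by blast
qed

lemma rc_refl:
  assumes L: "L \<in> {LT, LS4, LS5}" and G: "mcs L G"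
  shows "(G, G) \<in> RC L"
proof -
  have "\<chi> \<in> G" if b: "FBox \<chi> \<in> G" for \<chi>
  proof -
    have p: "pure \<chi>" using mcs_pure[OF G b] by simp
    have "FImp (FBox \<chi>) \<chi> \<in> G" using p L by (intro mcs_thm[OF G] derivable.axT) (auto simp: pure_wf)
    then show "\<chi> \<in> G" using mcs_mp[OF G _ b p] by blast
  qed
  then show ?thesis using G unfolding RC_def by blast
qed

lemma rc_trans:
  assumes L: "L \<in> {LK4, LS4, LS5}" and GD: "(G, D) \<in> RC L" and DE: "(D, E) \<in> RC L"
  shows "(G, E) \<in> RC L"
proof -
  have G: "mcs L G" and E: "mcs L E" and h1: "\<forall>\<chi>. FBox \<chi> \<in> G \<longrightarrow> \<chi> \<in> D"
    and h2: "\<forall>\<chi>. FBox \<chi> \<in> D \<longrightarrow> \<chi> \<in> E" using GD DE unfolding RC_def by auto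
  have "\<chi> \<in> E" if b: "FBox \<chi> \<in> G" for \<chi>
  proof -
    have p: "pure \<chi>" using mcs_pure[OF G b] by simp
    have "FImp (FBox \<chi>) (FBox (FBox \<chi>)) \<in> G" using p L by (intro mcs_thm[OF G] derivable.ax4) (auto simp: pure_wf)
    then have "FBox (FBox \<chi>) \<in> G" using mcs_mp[OF G _ b] p by auto
    then show "\<chi> \<in> E" using h1 h2 by blast
  qed
  then show ?thesis using G E unfolding RC_def by blast
qed

lemma rc_eucl:
  assumes L: "L \<in> {LK5, LS5}" and GD: "(G, D) \<in> RC L" and GE: "(G, E) \<in> RC L"
  shows "(D, E) \<in> RC L"
proof -
  have G: "mcs L G" and D: "mcs L D" and E: "mcs L E" and h1: "\<forall>\<chi>. FBox \<chi> \<in> G \<longrightarrow> \<chi> \<in> D"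
    and h2: "\<forall>\<chi>. FBox \<chi> \<in> G \<longrightarrow> \<chi> \<in> E" using GD GE unfolding RC_def by auto
  have "\<chi> \<in> E" if b: "FBox \<chi> \<in> D" for \<chi>
  proof (rule ccontr)
    have p: "pure \<chi>" using mcs_pure[OF D b] by simp
    assume "\<chi> \<notin> E"
    then have "FBox \<chi> \<notin> G" using h2 by blast
    then have nb: "FNeg (FBox \<chi>) \<in> G" using mcs_neg[OF G] p by simp
    have "FImp (FNeg (FBox \<chi>)) (FBox (FNeg (FBox \<chi>))) \<in> G"
      using p L by (intro mcs_thm[OF G] derivable.ax5) (auto simp: pure_wf)
    then have "FBox (FNeg (FBox \<chi>)) \<in> G" using mcs_mp[OF G _ nb] p by auto
    then have "FNeg (FBox \<chi>) \<in> D" using h1 by blast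
    then show False using mcs_not_both[OF D b] by blast
  qed
  then show ?thesis using D E unfolding RC_def by blast
qed

definition wit :: "logic \<Rightarrow> 'a fm set \<Rightarrow> 'a fm \<Rightarrow> 'a fm set" where
  "wit L G \<psi> = (if mcs L G \<and> pure \<psi> \<and> FBox \<psi> \<notin> G
     then SOME D. mcs L D \<and> (G, D) \<in> RC L \<and> \<psi> \<notin> D else G)"

lemma wit_mcs: "mcs L G \<Longrightarrow> mcs L (wit L G \<psi>)"
proof (cases "mcs L G \<and> pure \<psi> \<and> FBox \<psi> \<notin> G")
  case True
  then have "\<exists>D. mcs L D \<and> (G, D) \<in> RC L \<and> \<psi> \<notin> D" using witness by blast
  then show ?thesis using True someI_ex[of "\<lambda>D. mcs L D \<and> (G, D) \<in> RC L \<and> \<psi> \<notin> D"]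
    by (simp add: wit_def)
next
  case False
  then show "mcs L G \<Longrightarrow> ?thesis" unfolding wit_def by auto
qed

lemma wit_prop: "mcs L G \<Longrightarrow> pure \<psi> \<Longrightarrow> FBox \<psi> \<notin> G \<Longrightarrow> (G, wit L G \<psi>) \<in> RC L \<and> \<psi> \<notin> wit L G \<psi>"
proof -
  assume a: "mcs L G" "pure \<psi>" "FBox \<psi> \<notin> G"
  then have "\<exists>D. mcs L D \<and> (G, D) \<in> RC L \<and> \<psi> \<notin> D" using witness by blast
  then show ?thesis using a someI_ex[of "\<lambda>D. mcs L D \<and> (G, D) \<in> RC L \<and> \<psi> \<notin> D"]
    by (simp add: wit_def)
qed

definition WS :: "logic \<Rightarrow> ('a::countable) fm set \<Rightarrow> 'a fm set set" where
  "WS L G0 = range (\<lambda>xs::'a pm list. foldl (wit L) G0 (map to_fm xs))"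

lemma foldl_wit_mcs: "mcs L G0 \<Longrightarrow> mcs L (foldl (wit L) G0 xs)"
  by (induct xs arbitrary: G0) (auto simp: wit_mcs)

lemma WS_mcs: "mcs L G0 \<Longrightarrow> G \<in> WS L G0 \<Longrightarrow> mcs L G"
  unfolding WS_def using foldl_wit_mcs by auto

lemma WS_G0: "G0 \<in> WS L G0"
  unfolding WS_def by (rule range_eqI[of _ _ "[]"]) simp

lemma WS_closed: "G \<in> WS L G0 \<Longrightarrow> pure \<psi> \<Longrightarrow> wit L G \<psi> \<in> WS L G0"
proof -
  assume G: "G \<in> WS L G0" and p: "pure \<psi>"
  obtain m where m: "\<psi> = to_fm m" using pure_range[OF p] by blast
  obtain xs where xs: "G = foldl (wit L) G0 (map to_fm xs)" using G unfolding WS_def by blast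
  have "wit L G \<psi> = foldl (wit L) G0 (map to_fm (xs @ [m]))" using xs m by simp
  then show ?thesis unfolding WS_def by blast
qed

lemma WS_countable: "countable (WS L G0)"
  unfolding WS_def by (rule countable_image) simp

definition cmodel :: "logic \<Rightarrow> ('a::countable) fm set \<Rightarrow> ('a fm set \<Rightarrow> 'w) \<Rightarrow> ('w, 'a) model" where
  "cmodel L G0 e = (e ` WS L G0, map_prod e e ` (RC L \<inter> WS L G0 \<times> WS L G0),
     \<lambda>p. e ` {G \<in> WS L G0. FAt p \<in> G})"

lemma rel_iff:
  assumes "inj_on e W" "G \<in> W"
  shows "((e G, v) \<in> map_prod e e ` (R \<inter> W \<times> W)) = (\<exists>D\<in>W. v = e D \<and> (G, D) \<in> R)"
proof
  assume "(e G, v) \<in> map_prod e e ` (R \<inter> W \<times> W)"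
  then obtain a b where ab: "(a, b) \<in> R" "a \<in> W" "b \<in> W" "e G = e a" "v = e b" by auto
  then have "a = G" using inj_onD[OF assms(1)] assms(2) by metis
  then show "\<exists>D\<in>W. v = e D \<and> (G, D) \<in> R" using ab by auto
next
  assume "\<exists>D\<in>W. v = e D \<and> (G, D) \<in> R"
  then obtain D where D: "D \<in> W" "v = e D" "(G, D) \<in> R" by auto
  show "(e G, v) \<in> map_prod e e ` (R \<inter> W \<times> W)"
    by (rule image_eqI[of _ _ "(G, D)"]) (use D assms(2) in auto)
qed

lemma truth:
  assumes G0: "mcs L G0" and ie: "inj_on e (WS L G0)"
  shows "pure \<psi> \<Longrightarrow> G \<in> WS L G0 \<Longrightarrow> sat (cmodel L G0 e) [] (e G) [] \<psi> = (\<psi> \<in> G)"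
proof (induct \<psi> arbitrary: G)
  case FTop
  have "derivable L FTop" by (rule derivable.taut) (auto simp: ptaut_def)
  then show ?case using mcs_thm[OF WS_mcs[OF G0 FTop(2)], of FTop] by simp
next
  case (FAt p)
  then show ?case using ie by (simp add: cmodel_def atv_def inj_on_image_mem_iff)
next
  case (FNeg a)
  then show ?case using mcs_neg[OF WS_mcs[OF G0 FNeg(3)]] by simp
next
  case (FAnd a b)
  then show ?case using mcs_and[OF WS_mcs[OF G0 FAnd(4)]] by simp
next
  case (FBox a)
  have Gm: "mcs L G" using WS_mcs[OF G0 FBox(3)] .
  have pa: "pure a" using FBox by simp
  have "sat (cmodel L G0 e) [] (e G) [] (FBox a) =
     (\<forall>D\<in>WS L G0. (G, D) \<in> RC L \<longrightarrow> sat (cmodel L G0 e) [] (e D) [] a)"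
    using rel_iff[OF ie FBox(3), of _ "RC L"] by (auto simp: cmodel_def)
  also have "\<dots> = (\<forall>D\<in>WS L G0. (G, D) \<in> RC L \<longrightarrow> a \<in> D)"
    using FBox(1)[OF pa] by auto
  also have "\<dots> = (FBox a \<in> G)"
  proof
    assume h: "\<forall>D\<in>WS L G0. (G, D) \<in> RC L \<longrightarrow> a \<in> D"
    show "FBox a \<in> G"
    proof (rule ccontr)
      assume n: "FBox a \<notin> G"
      have "wit L G a \<in> WS L G0" using WS_closed[OF FBox(3) pa] .
      then show False using h wit_prop[OF Gm pa n] by blast
    qed
  qed (auto simp: RC_def)
  finally show ?case .
qed auto

lemma cframe:
  assumes G0: "mcs L G0"
  shows "frame_cond L (WS L G0) (RC L \<inter> WS L G0 \<times> WS L G0)"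
proof -
  let ?W = "WS L G0" let ?R = "RC L \<inter> WS L G0 \<times> WS L G0"
  have refl: "refl_on ?W ?R" if "L \<in> {LT, LS4, LS5}"
    unfolding refl_on_def using rc_refl[OF that] WS_mcs[OF G0] by blast
  have tr: "trans ?R" if "L \<in> {LK4, LS4, LS5}"
    unfolding trans_def using rc_trans[OF that] by blast
  have eu: "euclidean ?R" if "L \<in> {LK5, LS5}"
    unfolding euclidean_def using rc_eucl[OF that] by blast
  have sy: "sym ?R" if "L = LS5"
  proof -
    have r: "refl_on ?W ?R" using refl that by auto
    have e: "euclidean ?R" using eu that by auto
    show ?thesis unfolding sym_def
    proof (intro allI impI)
      fix x y assume xy: "(x, y) \<in> ?R"
      then have "(x, x) \<in> ?R" using r unfolding refl_on_def by blast
      then show "(y, x) \<in> ?R" using e xy unfolding euclidean_def by blast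
    qed
  qed
  show ?thesis using refl tr eu sy by (cases L) (auto simp: equiv_def)
qed

lemma fc_transport:
  assumes ie: "inj_on e A" and R: "R \<subseteq> A \<times> A" and fc: "frame_cond L A R"
  shows "frame_cond L (e ` A) (map_prod e e ` R)"
proof -
  let ?R = "map_prod e e ` R"
  have eq: "\<And>x y. x \<in> A \<Longrightarrow> y \<in> A \<Longrightarrow> e x = e y \<Longrightarrow> x = y" using ie by (auto simp: inj_on_def)
  have el: "\<exists>a b. p = (e a, e b) \<and> (a, b) \<in> R \<and> a \<in> A \<and> b \<in> A" if "p \<in> ?R" for p
    using that R by auto
  have img: "(e a, e b) \<in> ?R" if "(a, b) \<in> R" for a b
    using that by (auto intro: image_eqI[of _ _ "(a, b)"])
  have refl: "refl_on (e ` A) ?R" if "refl_on A R"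
    using that img unfolding refl_on_def by auto
  have tr: "trans ?R" if t: "trans R"
    unfolding trans_def
  proof (intro allI impI)
    fix x y z assume xy: "(x, y) \<in> ?R" and yz: "(y, z) \<in> ?R"
    obtain a b where ab: "(x, y) = (e a, e b)" "(a, b) \<in> R" "a \<in> A" "b \<in> A" using el[OF xy] by blast
    obtain c d where cd: "(y, z) = (e c, e d)" "(c, d) \<in> R" "c \<in> A" "d \<in> A" using el[OF yz] by blast
    have "b = c" using eq[of b c] ab cd by auto
    then have "(a, d) \<in> R" using t ab cd by (meson transD)
    then show "(x, z) \<in> ?R" using img ab cd by auto
  qed
  have eu: "euclidean ?R" if t: "euclidean R"
    unfolding euclidean_def
  proof (intro allI impI)
    fix x y z assume h: "(x, y) \<in> ?R \<and> (x, z) \<in> ?R"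
    obtain a b where ab: "(x, y) = (e a, e b)" "(a, b) \<in> R" "a \<in> A" "b \<in> A" using el[of "(x, y)"] h by blast
    obtain c d where cd: "(x, z) = (e c, e d)" "(c, d) \<in> R" "c \<in> A" "d \<in> A" using el[of "(x, z)"] h by blast
    have "a = c" using eq[of a c] ab cd by auto
    then have "(b, d) \<in> R" using t ab cd unfolding euclidean_def by blast
    then show "(y, z) \<in> ?R" using img ab cd by auto
  qed
  have sy: "sym ?R" if t: "sym R"
    unfolding sym_def
  proof (intro allI impI)
    fix x y assume h: "(x, y) \<in> ?R"
    obtain a b where ab: "(x, y) = (e a, e b)" "(a, b) \<in> R" "a \<in> A" "b \<in> A" using el[of "(x, y)"] h by blast
    then have "(b, a) \<in> R" using t by (meson symD)
    then show "(y, x) \<in> ?R" using img ab by auto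
  qed
  have sub: "?R \<subseteq> e ` A \<times> e ` A" using R by auto
  show ?thesis using fc refl tr eu sy sub by (cases L) (auto simp: equiv_def)
qed

lemma completeness_pure:
  assumes inf: "infinite (UNIV :: 'w set)" and p: "pure \<psi>" and v: "valid L TYPE('w) (\<psi> :: ('a::countable) fm)"
  shows "derivable L \<psi>"
proof (rule ccontr)
  assume nd: "\<not> derivable L \<psi>"
  have "cons L {FNeg \<psi>}"
    unfolding cons_def
  proof (intro allI impI notI)
    fix xs assume xs: "set xs \<subseteq> {FNeg \<psi>}" and d: "derivable L (FNeg (conj xs))"
    have "derivable L \<psi>" by (rule taut_mp1[OF d]) (use xs in \<open>auto simp: ptaut_def p pure_wf\<close>)
    with nd show False ..
  qed
  then obtain G0 where G0: "mcs L G0" "FNeg \<psi> \<in> G0" using lindenbaum[of L "{FNeg \<psi>}"] p by auto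
  let ?W = "WS L G0"
  have cW: "countable ?W" by (rule WS_countable)
  obtain g :: "nat \<Rightarrow> 'w" where g: "inj g" using infinite_countable_subset[OF inf] by auto
  define e where "e = g \<circ> to_nat_on ?W"
  have ie: "inj_on e ?W" unfolding e_def
    using g inj_on_to_nat_on[OF cW] by (metis comp_inj_on inj_on_subset subset_UNIV)
  let ?M = "cmodel L G0 e :: ('w, 'a) model"
  have im: "is_model ?M" using WS_G0[of G0 L] by (auto simp: cmodel_def is_model_def)
  have fc: "frame_cond L (fst ?M) (fst (snd ?M))"
    unfolding cmodel_def using fc_transport[OF ie _ cframe[OF G0(1)]] by auto
  have LM: "L_model L ?M" using im fc by (simp add: L_model_def)
  have inW: "e G0 \<in> fst ?M" using WS_G0[of G0 L] by (simp add: cmodel_def)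
  have "sats ?M (e G0) \<psi>" using v LM inW unfolding valid_def by blast
  then have "\<psi> \<in> G0" using truth[OF G0(1) ie p WS_G0] by (simp add: sats_def)
  then show False using mcs_not_both[OF G0(1)] G0(2) by blast
qed

theorem theorem2:
  fixes L :: logic and \<phi> :: "('a::countable) fm"
  assumes "wf_fm \<phi>" and "infinite (UNIV :: 'w set)"
  shows "(valid L TYPE('w) \<phi> \<longleftrightarrow> derivable L \<phi>)
       \<and> (derivable L \<phi> \<longrightarrow> valid L TYPE('v) \<phi>)"
proof -
  have c: "derivable L \<phi>" if v: "valid L TYPE('w) \<phi>"
  proof -
    have r: "pure (red \<phi>)" "derivable L (FIff \<phi> (red \<phi>))" using red_ok[OF assms(1)] by auto
    have "valid L TYPE('w) (red \<phi>)"
      unfolding valid_def sats_def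
    proof (intro allI impI ballI)
      fix M :: "('w, 'a) model" and w assume M: "L_model L M" and w: "w \<in> fst M"
      have "sat M [] w [] \<phi>" using v M w unfolding valid_def sats_def by blast
      moreover have "sat M [] w [] (FIff \<phi> (red \<phi>))" using soundness[OF r(2) M w] by simp
      ultimately show "sat M [] w [] (red \<phi>)" by simp
    qed
    then have "derivable L (red \<phi>)" by (rule completeness_pure[OF assms(2) r(1)])
    then show ?thesis
      by (rule taut_mp2[OF r(2)]) (use assms(1) in \<open>auto simp: ptaut_def\<close>)
  qed
  have s1: "derivable L \<phi> \<Longrightarrow> valid L TYPE('w) \<phi>" by (rule soundness_valid)
  have s2: "derivable L \<phi> \<Longrightarrow> valid L TYPE('v) \<phi>" by (rule soundness_valid)
  show ?thesis using c s1 s2 by blast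
qed

end
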